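(* Let $\mathbf{a}\in\mathbb{Z}_{>0}^n$ and let $\epsilon,\delta$ satisfy $0<\epsilon<\delta<\dfrac{0.1}{n\,2^n\|\mathbf{a}\|_1}$. Then $$\left[\frac{(n-1)!}{\epsilon}\,\mathrm{Vol}\Big(\big(C(\delta\mathbf{a},1)\cap C(\mathbf{0},1+\epsilon)\big)\setminus C(\mathbf{0},1)\Big)\right]=\big|\{\boldsymbol\sigma\in\{-1,1\}^n:\langle\boldsymbol\sigma,\mathbf{a}\rangle>0\}\big|,$$ where $[x]$ denotes the integer nearest to $x$.
   Context: For $\mathbf{c}\in\mathbb{R}^n$, $r\ge 0$, $C(\mathbf{c},r)=\{\mathbf{x}\in\mathbb{R}^n:\|\mathbf{x}-\mathbf{c}\|_1\le r\}$. $\langle\mathbf{u},\mathbf{v}\rangle=\sum_iu_iv_i$. *)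

theory Defs
  imports "HOL-Analysis.Analysis"
begin

definition l1ball :: "real^'n \<Rightarrow> real \<Rightarrow> (real^'n) set" where
  "l1ball c r = {x. (\<Sum>i\<in>UNIV. \<bar>x $ i - c $ i\<bar>) \<le> r}"

end

theory Submission
  imports Defs
begin


lemma emeasure_simplex_gen:
  fixes t :: real assumes t: "t \<ge> 0"
  shows "emeasure lborel {x::'a::euclidean_space. (\<forall>i\<in>Basis. 0 \<le> x \<bullet> i) \<and> sum ((\<bullet>) x) Basis \<le> t} =
          ennreal (t ^ DIM('a) / fact DIM('a))"
proof -
  have "emeasure lborel {x::'a. (\<forall>i\<in>Basis. 0 \<le> x \<bullet> i) \<and> sum ((\<bullet>) x) Basis \<le> t} =
               emeasure (distr (Pi\<^sub>M Basis (\<lambda>b. lborel)) borel (\<lambda>f. \<Sum>b\<in>Basis. f b *\<^sub>R b))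
                 {x::'a. (\<forall>i\<in>Basis. 0 \<le> x \<bullet> i) \<and> sum ((\<bullet>) x) Basis \<le> t}"
    by (subst lborel_eq) simp
  also have "\<dots> = emeasure (Pi\<^sub>M Basis (\<lambda>b. lborel))
                    ({y::'a \<Rightarrow> real. (\<forall>i\<in>Basis. 0 \<le> y i) \<and> sum y Basis \<le> t} \<inter>
                      space (Pi\<^sub>M Basis (\<lambda>b. lborel)))"
    by (subst emeasure_distr) auto
  also have "\<dots> = ennreal (t ^ DIM('a) / fact DIM('a))"
    using t by (subst emeasure_std_simplex_aux) auto
  finally show ?thesis .
qed

lemma sum_Basis_cart: "(\<Sum>j\<in>(Basis::(real^'n) set). f j) = (\<Sum>i\<in>UNIV. f (axis i 1))"
proof -
  have "(Basis::(real^'n) set) = range (\<lambda>i. axis i 1)" by (auto simp: Basis_vec_def)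
  moreover have "inj (\<lambda>i::'n. axis i (1::real))" by (auto simp: inj_on_def axis_eq_axis)
  ultimately show ?thesis by (metis sum.reindex comp_apply sum.cong)
qed

definition simp_set :: "real \<Rightarrow> (real^'n) set" where
  "simp_set t = {y. (\<forall>i. 0 \<le> y$i) \<and> (\<Sum>i\<in>UNIV. y$i) \<le> t}"

lemma simp_set_closed: "closed (simp_set t)"
proof -
  have "simp_set t = (\<Inter>i. {y::real^'n. 0 \<le> y$i}) \<inter> {y. (\<Sum>i\<in>UNIV. y$i) \<le> t}"
    by (auto simp: simp_set_def)
  moreover have "closed {y::real^'n. (\<Sum>i\<in>UNIV. y$i) \<le> t}"
    by (intro closed_Collect_le continuous_intros)
  moreover have "closed {y::real^'n. 0 \<le> y$i}" for i
    by (intro closed_Collect_le continuous_intros)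
  ultimately show ?thesis by (metis closed_INT closed_Int)
qed

lemma emeasure_simp_set: assumes "t \<ge> 0"
  shows "emeasure lborel (simp_set t :: (real^'n) set) = ennreal (t ^ CARD('n) / fact CARD('n))"
proof -
  have "simp_set t = {x::real^'n. (\<forall>i\<in>Basis. 0 \<le> x \<bullet> i) \<and> sum ((\<bullet>) x) Basis \<le> t}"
    by (auto simp: simp_set_def sum_Basis_cart inner_axis) (auto simp: Basis_vec_def inner_axis)
  then show ?thesis using emeasure_simplex_gen[OF assms, where 'a="real^'n"] by simp
qed

lemma emeasure_diag_affine:
  fixes s t :: "real^'n" and A :: "(real^'n) set"
  assumes s: "\<And>i. \<bar>s$i\<bar> = 1" and A: "A \<in> sets borel"
  shows "emeasure lborel ((\<lambda>x. \<chi> i. s$i * x$i + t$i) -` A) = emeasure lborel A"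
proof -
  define c where "c = (\<lambda>j::real^'n. s \<bullet> j)"
  define T where "T = (\<lambda>x::real^'n. t + (\<Sum>j\<in>Basis. (c j * (x \<bullet> j)) *\<^sub>R j))"
  have cj: "j \<in> Basis \<Longrightarrow> \<bar>c j\<bar> = 1" for j
    using s by (auto simp: c_def Basis_vec_def inner_axis)
  have Teq: "T = (\<lambda>x. \<chi> i. s$i * x$i + t$i)"
  proof
    fix x :: "real^'n"
    define v where "v = (\<chi> i. s$i * x$i)"
    have "(\<Sum>j\<in>Basis. (c j * (x \<bullet> j)) *\<^sub>R j) = (\<Sum>j\<in>Basis. (v \<bullet> j) *\<^sub>R j)"
      by (intro sum.cong) (auto simp: c_def v_def Basis_vec_def inner_axis)
    also have "\<dots> = v" by (rule euclidean_representation)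
    finally show "T x = (\<chi> i. s$i * x$i + t$i)"
      by (simp add: T_def v_def vec_eq_iff)
  qed
  have "lborel = density (distr lborel borel T) (\<lambda>_. (\<Prod>j\<in>Basis. \<bar>c j\<bar>))"
    unfolding T_def by (rule lborel_affine_euclidean) (use cj in fastforce)
  also have "(\<Prod>j\<in>Basis. \<bar>c j\<bar>) = 1" using cj by (simp add: prod.neutral)
  finally have eq: "lborel = distr lborel borel T" by (simp add: density_1)
  have Tm: "T \<in> borel \<rightarrow>\<^sub>M borel" by (simp add: T_def)
  have "emeasure lborel A = emeasure (distr lborel borel T) A" using eq by simp
  also have "\<dots> = emeasure lborel (T -` A)" using A Tm by (simp add: emeasure_distr)
  finally show ?thesis by (simp add: Teq)
qed


lemma diag_meas: "(\<lambda>x::real^'n. \<chi> i. s$i * x$i + t$i) \<in> borel \<rightarrow>\<^sub>M borel"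
  by (intro borel_measurable_continuous_onI continuous_intros continuous_on_vec_lambda)

lemma measure_diag_affine:
  fixes s t :: "real^'n" and A :: "(real^'n) set"
  assumes s: "\<And>i. \<bar>s$i\<bar> = 1" and A: "A \<in> sets borel"
  shows "measure lborel ((\<lambda>x. \<chi> i. s$i * x$i + t$i) -` A) = measure lborel A"
  using emeasure_diag_affine[OF assms] by (simp add: measure_def)

lemma diag_sets: assumes "A \<in> sets borel"
  shows "(\<lambda>x::real^'n. \<chi> i. s$i * x$i + t$i) -` A \<in> sets borel"
  using measurable_sets[OF diag_meas assms] by simp

definition shell :: "real \<Rightarrow> real \<Rightarrow> (real^'n) set" where
  "shell r1 r2 = simp_set r2 - simp_set r1"

lemma shell_sets: "shell r1 r2 \<in> sets borel"
  unfolding shell_def using simp_set_closed by (intro sets.Diff borel_closed) auto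

lemma simp_set_mono: "r1 \<le> r2 \<Longrightarrow> simp_set r1 \<subseteq> simp_set r2"
  by (auto simp: simp_set_def)

lemma measure_shell: assumes "0 \<le> r1" "r1 \<le> r2"
  shows "measure lborel (shell r1 r2 :: (real^'n) set) = (r2 ^ CARD('n) - r1 ^ CARD('n)) / fact CARD('n)"
proof -
  have m: "measure lborel (simp_set r :: (real^'n) set) = r ^ CARD('n) / fact CARD('n)" if "0 \<le> r" for r
    using emeasure_simp_set[OF that, where 'n='n] that by (simp add: measure_def)
  have "measure lborel (shell r1 r2 :: (real^'n) set) = measure lborel (simp_set r2 :: (real^'n) set) - measure lborel (simp_set r1 :: (real^'n) set)"
    unfolding shell_def using assms simp_set_closed simp_set_mono[OF assms(2)]
    by (intro measure_Diff) (auto simp: emeasure_simp_set intro: borel_closed)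
  then show ?thesis using assms m by (simp add: diff_divide_distrib)
qed

lemma mem_shell: "y \<in> shell r1 r2 \<longleftrightarrow> (\<forall>i. 0 \<le> y$i) \<and> r1 < (\<Sum>i\<in>UNIV. y$i) \<and> (\<Sum>i\<in>UNIV. y$i) \<le> r2"
  by (auto simp: shell_def simp_set_def)

lemma l1ball_closed: "closed (l1ball c r)"
  unfolding l1ball_def by (intro closed_Collect_le continuous_intros)



definition sv :: "int^'n \<Rightarrow> real^'n" where "sv \<sigma> = (\<chi> i. real_of_int (\<sigma>$i))"

definition Gset :: "int^'n \<Rightarrow> (int^'n) set" where
  "Gset a = {\<sigma> :: int^'n. (\<forall>i. \<sigma> $ i \<in> {-1, 1}) \<and> (\<Sum>i\<in>UNIV. \<sigma> $ i * a $ i) > 0}"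

lemma Pset_finite_card:
  "finite {\<sigma> :: int^'n. \<forall>i. \<sigma> $ i \<in> {-1, 1}} \<and> card {\<sigma> :: int^'n. \<forall>i. \<sigma> $ i \<in> {-1, 1}} \<le> 2 ^ CARD('n)"
proof -
  let ?P = "{\<sigma> :: int^'n. \<forall>i. \<sigma> $ i \<in> {-1, 1}}"
  let ?f = "\<lambda>\<sigma>::int^'n. {i. \<sigma>$i = 1}"
  have inj: "inj_on ?f ?P"
  proof (rule inj_onI)
    fix x y assume x: "x \<in> ?P" and y: "y \<in> ?P" and e: "?f x = ?f y"
    show "x = y"
    proof (subst vec_eq_iff, intro allI)
      fix i
      have "(x$i = 1) = (y$i = 1)" using e by blast
      moreover have "x$i = -1 \<or> x$i = 1" "y$i = -1 \<or> y$i = 1" using x y by auto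
      ultimately show "x$i = y$i" by auto
    qed
  qed
  have sub: "?f ` ?P \<subseteq> Pow UNIV" by auto
  have fin: "finite ?P" by (rule inj_on_finite[OF inj sub]) simp
  have "card ?P \<le> card (Pow (UNIV::'n set))" by (rule card_inj_on_le[OF inj sub]) simp
  then show ?thesis using fin by (simp add: card_Pow)
qed

lemma Gset_finite_card: "finite (Gset a) \<and> card (Gset (a::int^'n)) \<le> 2 ^ CARD('n)"
proof -
  have sub: "Gset a \<subseteq> {\<sigma> :: int^'n. \<forall>i. \<sigma> $ i \<in> {-1, 1}}" by (auto simp: Gset_def)
  show ?thesis using Pset_finite_card[where 'n='n] finite_subset[OF sub] card_mono[OF _ sub] by fastforce
qed

lemma sv_cases: assumes "\<sigma> \<in> Gset a" shows "sv \<sigma> $ i = 1 \<or> sv \<sigma> $ i = -1"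
proof -
  have "\<sigma>$i = -1 \<or> \<sigma>$i = 1" using assms by (auto simp: Gset_def)
  then show ?thesis by (auto simp: sv_def)
qed

lemma sv_abs: "\<sigma> \<in> Gset a \<Longrightarrow> \<bar>sv \<sigma> $ i\<bar> = 1"
  using sv_cases[of \<sigma> a i] by auto

lemma sv_sum: "(\<Sum>i\<in>UNIV. sv \<sigma> $ i * real_of_int (a $ i)) = real_of_int (\<Sum>i\<in>UNIV. \<sigma> $ i * a $ i)"
  by (simp add: sv_def)

definition Sset :: "int^'n \<Rightarrow> real \<Rightarrow> real \<Rightarrow> (real^'n) set" where
  "Sset a \<epsilon> \<delta> = (l1ball (\<chi> i. \<delta> * real_of_int (a $ i)) 1 \<inter> l1ball 0 (1 + \<epsilon>)) - l1ball 0 1"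

definition Uset :: "real \<Rightarrow> int^'n \<Rightarrow> (real^'n) set" where
  "Uset \<epsilon> \<sigma> = (\<lambda>x. \<chi> i. sv \<sigma>$i * x$i + (0::real^'n)$i) -` shell 1 (1+\<epsilon>)"

definition Tset :: "int^'n \<Rightarrow> real \<Rightarrow> real \<Rightarrow> int^'n \<Rightarrow> (real^'n) set" where
  "Tset a \<epsilon> \<delta> \<sigma> = (\<lambda>x. \<chi> i. sv \<sigma>$i * x$i + (\<chi> i. - (\<delta> * real_of_int (a$i)))$i) -`
      shell (1 - \<delta> * (\<Sum>i\<in>UNIV. real_of_int (a$i))) (1 - \<delta> * (\<Sum>i\<in>UNIV. real_of_int (a$i)) + \<epsilon>)"

lemma cover:
  assumes apos: "\<forall>i. a $ i > 0" and del: "0 \<le> \<delta>" and x: "x \<in> Sset a \<epsilon> \<delta>"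
  shows "\<exists>\<sigma>\<in>Gset a. x \<in> Uset \<epsilon> \<sigma>"
proof -
  define \<sigma> where "\<sigma> = (\<chi> i. if x$i \<ge> 0 then (1::int) else -1)"
  have sx: "sv \<sigma> $ i * x $ i = \<bar>x$i\<bar>" for i by (auto simp: sv_def \<sigma>_def)
  have s1: "\<bar>sv \<sigma> $ i\<bar> = 1" for i by (auto simp: sv_def \<sigma>_def)
  have xin: "(\<Sum>i\<in>UNIV. \<bar>x$i\<bar>) \<le> 1 + \<epsilon>" "(\<Sum>i\<in>UNIV. \<bar>x$i\<bar>) > 1"
      "(\<Sum>i\<in>UNIV. \<bar>x$i - \<delta> * real_of_int (a$i)\<bar>) \<le> 1"
    using x by (auto simp: Sset_def l1ball_def)
  have "(\<Sum>i\<in>UNIV. \<sigma> $ i * a $ i) > 0"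
  proof (rule ccontr)
    assume "\<not> ?thesis"
    then have ne: "(\<Sum>i\<in>UNIV. sv \<sigma> $ i * real_of_int (a $ i)) \<le> 0" unfolding sv_sum by (simp only: of_int_le_0_iff not_less)
    have "(\<Sum>i\<in>UNIV. \<bar>x$i\<bar>) - \<delta> * (\<Sum>i\<in>UNIV. sv \<sigma> $ i * real_of_int (a $ i))
        = (\<Sum>i\<in>UNIV. sv \<sigma> $ i * (x$i - \<delta> * real_of_int (a$i)))"
      by (simp add: sum_subtractf sum_distrib_left algebra_simps sx[symmetric])
    also have "\<dots> \<le> (\<Sum>i\<in>UNIV. \<bar>x$i - \<delta> * real_of_int (a$i)\<bar>)"
    proof (rule sum_mono)
      fix i
      have "sv \<sigma> $ i * (x$i - \<delta> * real_of_int (a$i)) \<le> \<bar>sv \<sigma> $ i * (x$i - \<delta> * real_of_int (a$i))\<bar>" by simp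
      also have "\<dots> = \<bar>x$i - \<delta> * real_of_int (a$i)\<bar>" by (simp add: abs_mult s1)
      finally show "sv \<sigma> $ i * (x$i - \<delta> * real_of_int (a$i)) \<le> \<bar>x$i - \<delta> * real_of_int (a$i)\<bar>" .
    qed
    finally show False using xin ne del by (smt (verit) mult_nonneg_nonpos)
  qed
  then have G: "\<sigma> \<in> Gset a" by (auto simp: Gset_def \<sigma>_def)
  have "x \<in> Uset \<epsilon> \<sigma>" using xin by (simp add: Uset_def mem_shell sx)
  then show ?thesis using G by blast
qed

lemma inT:
  assumes apos: "\<forall>i. a $ i > 0" and del: "\<epsilon> < \<delta>" "0 < \<epsilon>" and G: "\<sigma> \<in> Gset a" and x: "x \<in> Tset a \<epsilon> \<delta> \<sigma>"
  shows "x \<in> Sset a \<epsilon> \<delta>"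
proof -
  define s where "s = sv \<sigma>"
  define y where "y = (\<chi> i. s$i * x$i - \<delta> * real_of_int (a$i))"
  define A where "A = (\<Sum>i\<in>UNIV. real_of_int (a$i))"
  have sc: "s$i = 1 \<or> s$i = -1" for i using sv_cases[OF G] by (simp add: s_def)
  have yin: "\<forall>i. 0 \<le> y$i" "1 - \<delta> * A < (\<Sum>i\<in>UNIV. y$i)" "(\<Sum>i\<in>UNIV. y$i) \<le> 1 - \<delta> * A + \<epsilon>"
    using x by (auto simp: Tset_def mem_shell y_def s_def A_def)
  have ai: "\<delta> * real_of_int (a$i) > 0" for i using apos del by simp
  have yi: "\<delta> * real_of_int (a$i) \<le> s$i * x$i" for i using yin(1) by (simp add: y_def)
  have absx: "\<bar>x$i\<bar> = y$i + \<delta> * real_of_int (a$i)" for i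
    using sc[of i] yi[of i] ai[of i] by (auto simp: y_def)
  have absd: "\<bar>x$i - \<delta> * real_of_int (a$i)\<bar> = y$i + \<delta> * real_of_int (a$i) - s$i * (\<delta> * real_of_int (a$i))" for i
    using sc[of i] yi[of i] ai[of i]
    by (auto simp: y_def abs_if)
  have sumx: "(\<Sum>i\<in>UNIV. \<bar>x$i\<bar>) = (\<Sum>i\<in>UNIV. y$i) + \<delta> * A"
    by (simp add: absx sum.distrib sum_distrib_left A_def)
  have ge1: "(\<Sum>i\<in>UNIV. s$i * real_of_int (a$i)) \<ge> 1"
  proof -
    have "(\<Sum>i\<in>UNIV. \<sigma> $ i * a $ i) \<ge> 1" using G by (auto simp: Gset_def)
    then have h: "real_of_int 1 \<le> real_of_int (\<Sum>i\<in>UNIV. \<sigma> $ i * a $ i)" by (rule of_int_le_iff[THEN iffD2])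
    show ?thesis unfolding s_def sv_sum using h by (simp only: of_int_1)
  qed
  have sumd: "(\<Sum>i\<in>UNIV. \<bar>x$i - \<delta> * real_of_int (a$i)\<bar>) = (\<Sum>i\<in>UNIV. \<bar>x$i\<bar>) - \<delta> * (\<Sum>i\<in>UNIV. s$i * real_of_int (a$i))"
    by (simp add: absd absx sum_subtractf sum_distrib_left algebra_simps)
  have "\<delta> * 1 \<le> \<delta> * (\<Sum>i\<in>UNIV. s$i * real_of_int (a$i))" using ge1 del
    by (intro mult_left_mono) auto
  then have h1: "(\<Sum>i\<in>UNIV. \<bar>x$i - \<delta> * real_of_int (a$i)\<bar>) \<le> 1"
    using sumx sumd yin del by linarith
  have h2: "(\<Sum>i\<in>UNIV. \<bar>x$i\<bar>) \<le> 1 + \<epsilon>" using sumx yin by linarith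
  have h3: "\<not> (\<Sum>i\<in>UNIV. \<bar>x$i\<bar>) \<le> 1" using sumx yin by linarith
  from h1 h2 h3 show ?thesis by (simp add: Sset_def l1ball_def)
qed

lemma T_disj:
  assumes apos: "\<forall>i. a $ i > 0" and del: "0 < \<delta>"
    and G: "\<sigma> \<in> Gset a" "\<tau> \<in> Gset a" "\<sigma> \<noteq> \<tau>"
  shows "disjnt (Tset a \<epsilon> \<delta> \<sigma>) (Tset a \<epsilon> \<delta> \<tau>)"
proof -
  obtain i where i: "\<sigma>$i \<noteq> \<tau>$i" using G(3) by (meson vec_eq_iff)
  have c: "\<sigma>$i \<in> {-1,1}" "\<tau>$i \<in> {-1,1}" using G by (auto simp: Gset_def)
  have ai: "\<delta> * real_of_int (a$i) > 0" using apos del by simp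
  {
    fix x assume x1: "x \<in> Tset a \<epsilon> \<delta> \<sigma>" and x2: "x \<in> Tset a \<epsilon> \<delta> \<tau>"
    have "sv \<sigma> $ i * x $ i - \<delta> * real_of_int (a$i) \<ge> 0" using x1 by (auto simp: Tset_def mem_shell)
    moreover have "sv \<tau> $ i * x $ i - \<delta> * real_of_int (a$i) \<ge> 0" using x2 by (auto simp: Tset_def mem_shell)
    ultimately have False using c i ai by (auto simp: sv_def)
  }
  then show ?thesis by (auto simp: disjnt_def)
qed



lemma pow_upper: fixes x :: real assumes "0 \<le> x" "2 * real m * x \<le> 1"
  shows "(1+x)^m \<le> 1 + 2 * real m * x"
  using assms(2)
proof (induction m)
  case 0 then show ?case by simp
next
  case (Suc m)
  have "2 * real m * x \<le> 2 * real (Suc m) * x" using assms(1) by (intro mult_right_mono) auto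
  then have h: "2 * real m * x \<le> 1" using Suc.prems by linarith
  have "(1+x)^Suc m = (1+x) * (1+x)^m" by simp
  also have "\<dots> \<le> (1+x) * (1 + 2 * real m * x)" using Suc.IH[OF h] assms(1) by (intro mult_left_mono) auto
  also have "\<dots> = 1 + x + 2 * real m * x + (2 * real m * x) * x" by (simp add: algebra_simps)
  also have "\<dots> \<le> 1 + x + 2 * real m * x + x" using h assms(1) by (intro add_left_mono) (simp add: mult_left_le_one_le)
  also have "\<dots> = 1 + 2 * real (Suc m) * x" by (simp add: algebra_simps)
  finally show ?case .
qed

lemma pow_diff_bounds: fixes x y :: real assumes "0 \<le> y" "y \<le> x"
  shows "x^n - y^n \<le> (x-y) * real n * x^(n-1)" "(x-y) * real n * y^(n-1) \<le> x^n - y^n"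
proof -
  have e: "x^n - y^n = (x-y) * (\<Sum>i<n. y ^ (n - Suc i) * x ^ i)" by (rule power_diff_sumr2)
  have up: "y ^ (n - Suc i) * x ^ i \<le> x^(n-1)" if "i < n" for i
  proof -
    have "y ^ (n - Suc i) * x ^ i \<le> x ^ (n - Suc i) * x ^ i"
      using assms by (intro mult_right_mono power_mono) auto
    also have "\<dots> = x^(n-1)" using that by (simp add: power_add[symmetric])
    finally show ?thesis .
  qed
  have lo: "y^(n-1) \<le> y ^ (n - Suc i) * x ^ i" if "i < n" for i
  proof -
    have "y^(n-1) = y ^ (n - Suc i) * y ^ i" using that by (simp add: power_add[symmetric])
    also have "\<dots> \<le> y ^ (n - Suc i) * x ^ i"
      using assms by (intro mult_left_mono power_mono) auto
    finally show ?thesis .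
  qed
  have s1: "(\<Sum>i<n. y ^ (n - Suc i) * x ^ i) \<le> real n * x^(n-1)"
    using sum_mono[of "{..<n}", OF up] by simp
  have s2: "real n * y^(n-1) \<le> (\<Sum>i<n. y ^ (n - Suc i) * x ^ i)"
    using sum_mono[of "{..<n}", OF lo] by simp
  have d: "0 \<le> x - y" using assms by simp
  show "x^n - y^n \<le> (x-y) * real n * x^(n-1)" unfolding e using mult_left_mono[OF s1 d] by (simp add: mult.assoc)
  show "(x-y) * real n * y^(n-1) \<le> x^n - y^n" unfolding e using mult_left_mono[OF s2 d] by (simp add: mult.assoc)
qed

lemma final_arith:
  fixes N A \<epsilon> \<delta> m :: real
  assumes n: "n \<ge> 1" and N: "0 \<le> N" "N \<le> 2^n" and e: "0 < \<epsilon>" "\<epsilon> < \<delta>"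
    and d: "\<delta> * (real n * 2^n * A) < 1/10" and A: "A \<ge> 1"
    and lo: "N * (((1 - \<delta>*A + \<epsilon>)^n - (1 - \<delta>*A)^n) / fact n) \<le> m"
    and up: "m \<le> N * (((1+\<epsilon>)^n - 1) / fact n)"
  shows "\<bar>fact (n-1) / \<epsilon> * m - N\<bar> < 1/2"
proof -
  have fn: "fact n = real n * fact (n-1)" using n by (simp add: fact_reduce)
  have fpos: "fact (n-1) > (0::real)" by simp
  have npos: "real n > 0" using n by simp
  have c: "fact (n-1) / \<epsilon> * (N * (z / fact n)) = N * z / (real n * \<epsilon>)" for z
    using fpos npos e by (simp add: fn field_simps)
  have K1: "real n * 2^n \<ge> 1" using n by (metis mult_ge1_I one_le_power of_nat_1 of_nat_le_iff one_le_numeral)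
  have dpos: "\<delta> > 0" using e by simp
  have nn: "real (n-1) \<le> real n * 2^n"
  proof -
    have "real n * 1 \<le> real n * 2^n" by (intro mult_left_mono) auto
    moreover have "real (n-1) \<le> real n" by simp
    ultimately show ?thesis by linarith
  qed
  have dA: "\<delta> * A < 1/10"
  proof -
    have "\<delta> * A * 1 \<le> \<delta> * A * (real n * 2^n)" using K1 dpos A by (intro mult_left_mono) auto
    then show ?thesis using d by (simp add: algebra_simps)
  qed
  have key: "real n * 2^n * \<delta> * A < 1/10" using d by (simp add: algebra_simps)
  have NnA: "N * real (n-1) * \<delta> * A \<le> real n * 2^n * \<delta> * A"
  proof -
    have "N * real (n-1) \<le> 2^n * real n" using N by (intro mult_mono) auto
    then show ?thesis using dpos A by (simp add: algebra_simps mult_right_mono)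
  qed
  have u1: "(1+\<epsilon>)^n - 1 \<le> \<epsilon> * real n * (1+\<epsilon>)^(n-1)"
    using pow_diff_bounds(1)[of 1 "1+\<epsilon>" n] e by simp
  have "\<delta> \<le> \<delta> * A" using mult_left_mono[of 1 A \<delta>] A dpos by simp
  then have eA: "\<epsilon> \<le> \<delta> * A" using e by linarith
  have u2: "(1+\<epsilon>)^(n-1) \<le> 1 + 2 * real (n-1) * \<epsilon>"
  proof (rule pow_upper)
    have "2 * real (n-1) * \<epsilon> \<le> 2 * (real n * 2^n) * (\<delta> * A)"
      using eA e nn by (intro mult_mono) auto
    then show "2 * real (n - 1) * \<epsilon> \<le> 1" using key by (simp add: algebra_simps)
  qed (use e in simp)
  have Xu: "N * ((1+\<epsilon>)^n - 1) / (real n * \<epsilon>) \<le> N * (1 + 2 * real (n-1) * \<epsilon>)"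
  proof -
    have "(1+\<epsilon>)^n - 1 \<le> \<epsilon> * real n * (1 + 2 * real (n-1) * \<epsilon>)"
      using u1 u2 e npos by (smt (verit) mult_left_mono mult_pos_pos)
    then have "N * ((1+\<epsilon>)^n - 1) \<le> N * (\<epsilon> * real n * (1 + 2 * real (n-1) * \<epsilon>))"
      using N by (intro mult_left_mono) auto
    then show ?thesis using e npos by (simp add: field_simps)
  qed
  have Xu2: "N * (2 * real (n-1) * \<epsilon>) < 1/4"
  proof -
    have "N * real (n-1) * \<epsilon> \<le> N * real (n-1) * (\<delta> * A)" using eA N by (intro mult_left_mono) auto
    then show ?thesis using NnA key by (simp add: algebra_simps)
  qed
  define b where "b = 1 - \<delta> * A"
  have b: "0 < b" "b \<le> 1" using dA dpos A b_def by auto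
  have l1: "\<epsilon> * real n * b^(n-1) \<le> (b+\<epsilon>)^n - b^n"
    using pow_diff_bounds(2)[of b "b+\<epsilon>" n] e b by simp
  have l2: "1 - real (n-1) * (\<delta>*A) \<le> b^(n-1)"
    using Bernoulli_inequality[of "-(\<delta>*A)" "n-1"] dA dpos A unfolding b_def by simp
  have Xl: "N * (1 - real (n-1) * (\<delta>*A)) \<le> N * ((b+\<epsilon>)^n - b^n) / (real n * \<epsilon>)"
  proof -
    have "\<epsilon> * real n * (1 - real (n-1) * (\<delta>*A)) \<le> (b+\<epsilon>)^n - b^n"
      using l1 l2 e npos by (smt (verit) mult_left_mono mult_pos_pos)
    then have "N * (\<epsilon> * real n * (1 - real (n-1) * (\<delta>*A))) \<le> N * ((b+\<epsilon>)^n - b^n)"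
      using N by (intro mult_left_mono) auto
    then show ?thesis using e npos by (simp add: field_simps)
  qed
  have Xl2: "N * (real (n-1) * (\<delta>*A)) < 1/4" using NnA key by (simp add: algebra_simps)
  have pos: "fact (n-1) / \<epsilon> > 0" using e by simp
  have m1: "fact (n-1) / \<epsilon> * m \<le> N * ((1+\<epsilon>)^n - 1) / (real n * \<epsilon>)"
    using mult_left_mono[OF up less_imp_le[OF pos]] c by simp
  have m2: "N * ((b+\<epsilon>)^n - b^n) / (real n * \<epsilon>) \<le> fact (n-1) / \<epsilon> * m"
    using mult_left_mono[OF lo less_imp_le[OF pos]] c[of "(b+\<epsilon>)^n - b^n"] unfolding b_def by (simp add: add.commute add.left_commute)
  have "fact (n-1) / \<epsilon> * m < N + 1/2" using m1 Xu Xu2 by (simp add: algebra_simps)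
  moreover have "fact (n-1) / \<epsilon> * m > N - 1/2" using m2 Xl Xl2 by (simp add: algebra_simps)
  ultimately show ?thesis by linarith
qed



lemma shell_fmeas: "0 \<le> r2 \<Longrightarrow> (shell r1 r2 :: (real^'n) set) \<in> fmeasurable lborel"
proof -
  assume r: "0 \<le> r2"
  have "simp_set r2 \<in> fmeasurable lborel"
    using simp_set_closed by (intro fmeasurableI) (auto intro: borel_closed simp: emeasure_simp_set[OF r])
  then show ?thesis by (rule fmeasurableI2) (auto simp: shell_def shell_sets[unfolded shell_def])
qed

lemma diag_fmeas:
  fixes s t :: "real^'n"
  assumes s: "\<And>i. \<bar>s$i\<bar> = 1" and A: "A \<in> fmeasurable lborel"
  shows "(\<lambda>x. \<chi> i. s$i * x$i + t$i) -` A \<in> fmeasurable lborel"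
proof (rule fmeasurableI)
  have Ab: "A \<in> sets borel" using A by auto
  show "(\<lambda>x. \<chi> i. s$i * x$i + t$i) -` A \<in> sets lborel" using diag_sets[OF Ab] by simp
  show "emeasure lborel ((\<lambda>x. \<chi> i. s$i * x$i + t$i) -` A) < \<infinity>"
    using emeasure_diag_affine[OF s Ab] A by (simp add: fmeasurable_def)
qed

theorem mainTheorem20:
  fixes a :: "int^'n" and \<epsilon> \<delta> :: real
  assumes apos: "\<forall>i. a $ i > 0"
    and eps: "0 < \<epsilon>" and epsdel: "\<epsilon> < \<delta>"
    and del: "\<delta> < (1/10) / (real CARD('n) * 2 ^ CARD('n) * (\<Sum>i\<in>UNIV. real_of_int \<bar>a $ i\<bar>))"
  shows "round (fact (CARD('n) - 1) / \<epsilon> *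
            measure lebesgue
              ((l1ball (\<chi> i. \<delta> * real_of_int (a $ i)) 1 \<inter> l1ball 0 (1 + \<epsilon>)) - l1ball 0 1))
         = int (card {\<sigma> :: int^'n. (\<forall>i. \<sigma> $ i \<in> {-1, 1}) \<and> (\<Sum>i\<in>UNIV. \<sigma> $ i * a $ i) > 0})"
proof -
  let ?n = "CARD('n)"
  define G where "G = Gset a"
  define N where "N = card G"
  define A where "A = (\<Sum>i\<in>UNIV. real_of_int (a $ i))"
  define S where "S = Sset a \<epsilon> \<delta>"
  have finG: "finite G" and NG: "N \<le> 2 ^ ?n" using Gset_finite_card[of a] by (auto simp: G_def N_def)
  have AA: "(\<Sum>i\<in>UNIV. real_of_int \<bar>a $ i\<bar>) = A" unfolding A_def using apos by (intro sum.cong refl) (metis abs_of_pos of_int_0_less_iff)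
  have A1: "A \<ge> 1"
  proof -
    have "(\<Sum>i\<in>(UNIV::'n set). (1::real)) \<le> A" unfolding A_def
    proof (rule sum_mono)
      fix i show "(1::real) \<le> real_of_int (a$i)" using apos[rule_format, of i] by linarith
    qed
    moreover have "(\<Sum>i\<in>(UNIV::'n set). (1::real)) \<ge> 1" by simp
    ultimately show ?thesis by linarith
  qed
  have n1: "?n \<ge> 1" by (simp add: Suc_leI)
  have dpos: "0 < \<delta>" using eps epsdel by simp
  have Kpos: "real ?n * 2 ^ ?n * A > 0" using A1 n1 by simp
  have dK: "\<delta> * (real ?n * 2 ^ ?n * A) < 1/10" using del Kpos unfolding AA by (simp add: pos_less_divide_eq)
  have K1: "real ?n * 2 ^ ?n \<ge> (1::real)" using n1 by (metis mult_ge1_I one_le_power of_nat_1 of_nat_le_iff one_le_numeral)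
  have dA: "\<delta> * A < 1/10"
  proof -
    have "\<delta> * A * 1 \<le> \<delta> * A * (real ?n * 2^?n)" using K1 dpos A1 by (intro mult_left_mono) auto
    then show ?thesis using dK by (simp add: algebra_simps)
  qed
  define b where "b = 1 - \<delta> * A"
  have b0: "0 \<le> b" using dA b_def by simp
  define mup where "mup = ((1+\<epsilon>)^?n - 1) / fact ?n"
  define mlo where "mlo = ((b+\<epsilon>)^?n - b^?n) / fact ?n"
  have Ssets: "S \<in> sets borel" unfolding S_def Sset_def
    using l1ball_closed by (intro sets.Diff sets.Int borel_closed) auto
  have Ub: "Uset \<epsilon> \<sigma> \<in> fmeasurable lborel" if "\<sigma> \<in> G" for \<sigma>
    unfolding Uset_def using that eps by (intro diag_fmeas shell_fmeas) (auto simp: G_def sv_abs)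
  have Usets: "Uset \<epsilon> \<sigma> \<in> sets lborel" if "\<sigma> \<in> G" for \<sigma>
    unfolding Uset_def sets_lborel by (rule diag_sets[OF shell_sets])
  have Um: "measure lborel (Uset \<epsilon> \<sigma>) = mup" if "\<sigma> \<in> G" for \<sigma>
    unfolding Uset_def mup_def using that eps
    by (subst measure_diag_affine) (auto simp: G_def sv_abs shell_sets measure_shell)
  have Tb: "Tset a \<epsilon> \<delta> \<sigma> \<in> fmeasurable lborel" if "\<sigma> \<in> G" for \<sigma>
    unfolding Tset_def using that eps b0 unfolding b_def A_def
    by (intro diag_fmeas shell_fmeas) (auto simp: G_def sv_abs)
  have Tsets: "Tset a \<epsilon> \<delta> \<sigma> \<in> sets lborel" for \<sigma>
    unfolding Tset_def sets_lborel by (rule diag_sets[OF shell_sets])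
  have Tm: "measure lborel (Tset a \<epsilon> \<delta> \<sigma>) = mlo" if "\<sigma> \<in> G" for \<sigma>
    unfolding Tset_def mlo_def using that eps b0 unfolding b_def A_def
    by (subst measure_diag_affine) (auto simp: G_def sv_abs shell_sets measure_shell)
  have UUf: "(\<Union>\<sigma>\<in>G. Uset \<epsilon> \<sigma>) \<in> fmeasurable lborel"
    using finG Ub by (intro fmeasurable.finite_UN) auto
  have SU: "S \<subseteq> (\<Union>\<sigma>\<in>G. Uset \<epsilon> \<sigma>)" using cover[OF apos less_imp_le[OF dpos]]
    unfolding S_def G_def by blast
  have Sf: "S \<in> fmeasurable lborel" using fmeasurableI2[OF UUf SU] Ssets by simp
  have "measure lborel S \<le> measure lborel (\<Union>\<sigma>\<in>G. Uset \<epsilon> \<sigma>)"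
    using SU Ssets UUf by (intro measure_mono_fmeasurable) auto
  also have "\<dots> \<le> (\<Sum>\<sigma>\<in>G. measure lborel (Uset \<epsilon> \<sigma>))"
    using finG Usets by (intro measure_UNION_le) auto
  also have "\<dots> = real N * mup" using Um by (simp add: N_def)
  finally have up: "measure lborel S \<le> real N * mup" .
  have "real N * mlo = (\<Sum>\<sigma>\<in>G. measure lborel (Tset a \<epsilon> \<delta> \<sigma>))" using Tm by (simp add: N_def)
  also have "\<dots> = measure lborel (\<Union>\<sigma>\<in>G. Tset a \<epsilon> \<delta> \<sigma>)"
    using finG Tb T_disj[OF apos dpos] by (intro measure_UNION'[symmetric]) (auto simp: pairwise_def G_def)
  also have "\<dots> \<le> measure lborel S"
    using inT[OF apos epsdel eps] Sf finG Tsets unfolding S_def G_def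
    by (intro measure_mono_fmeasurable) (auto intro!: sets.finite_UN)
  finally have lo: "real N * mlo \<le> measure lborel S" .
  have ml: "measure lebesgue S = measure lborel S" using Ssets by simp
  have "\<bar>fact (?n-1) / \<epsilon> * measure lebesgue S - real N\<bar> < 1/2"
    unfolding ml
    by (rule final_arith[OF n1 _ _ eps epsdel dK A1]) (use NG lo up in \<open>auto simp: mlo_def mup_def b_def\<close>)
  then have "round (fact (?n-1) / \<epsilon> * measure lebesgue S) = int N"
    by (intro round_unique') simp
  then show ?thesis by (simp add: S_def Sset_def N_def G_def Gset_def)
qed

end
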